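(* If an nfc-transducer $\mathcal{T}=(Q,V,\Delta,q_0)$ is consistent with a BPA system $\mathcal{G}=(V,\mathit{Act},\mathcal{R})$, then the equivalence $\equiv^{\mathcal{T}}$ on $V^*$, defined by $\alpha\equiv^{\mathcal{T}}\beta$ iff $\mathcal{T}_{q_0}(\alpha)=\mathcal{T}_{q_0}(\beta)$, is a branching bisimulation in $\mathcal{L}_\mathcal{G}$. Consequently $\mathcal{T}(\alpha)=\mathcal{T}(\beta)$ implies $\alpha\sim\beta$.
   Context: A BPA system $\mathcal{G}=(V,\mathit{Act},\mathcal{R})$: finite variables $V$, finite actions $\mathit{Act}$ (possibly containing silent $\tau$), rules $A\xrightarrow{a}\alpha$ ($A\in V,\alpha\in V^*$). LTS $\mathcal{L}_\mathcal{G}$ has states $V^*$ and transitions $A\beta\xrightarrow{a}\alpha\beta$ for rules $A\xrightarrow{a}\alpha$, $\beta\in V^*$. Branching bisimulation: a relation $\mathcal{B}$ such that for each $(s,t)\in\mathcal{B}$, each move $s\xrightarrow{a}s'$ is matched by either $a=\tau$ and $(s',t)\in\mathcal{B}$, or a path $t=t_0\xrightarrow{\tau}\cdots\xrightarrow{\tau}t_k\xrightarrow{a}t'$ with $(s',t')\in\mathcal{B}$ and $(s,t_i)\in\mathcal{B}$ for $i\in[1,k]$, and symmetrically for moves of $t$; $\sim$ is the largest branching bisimulation. Transducer $\mathcal{T}=(Q,V,\Delta,q_0)$, $\Delta:Q\times V\to Q\times V^*$, reading right to left: $q'\xleftarrow{A/\gamma}q$ means $\Delta(q,A)=(q',\gamma)$,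 extended by $q\xleftarrow{\varepsilon/\varepsilon}q$ and composition $q''\xleftarrow{\alpha A/\beta\gamma}q$ from $q'\xleftarrow{A/\gamma}q$, $q''\xleftarrow{\alpha/\beta}q'$. $\mathcal{T}_q(\alpha)$ is the output from $q$ on $\alpha$; $\mathcal{T}=\mathcal{T}_{q_0}$. $q$-normal forms: $\varepsilon$ or $A_k\cdots A_1$ with $q_k\xleftarrow{A_k/A_k}\cdots q_1\xleftarrow{A_1/A_1}q$. nfc-transducer: each $\mathcal{T}_q(A)$ is a $q$-normal form and $q'\xleftarrow{A/\gamma}q$ implies $q'\xleftarrow{\gamma/\gamma}q$. Long moves: $\alpha\overset{a}{\Rightarrow}_q\beta$ if either $a=\tau$ and $\beta=\mathcal{T}_q(\alpha)$, or $\alpha=\alpha_0\xrightarrow{\tau}\alpha_1\cdots\xrightarrow{\tau}\alpha_k\xrightarrow{a}\beta'$ in $\mathcal{L}_\mathcal{G}$ ($k\ge0$) with $\mathcal{T}_q(\alpha_0)=\cdots=\mathcal{T}_q(\alpha_k)$ and $\mathcal{T}_q(\beta')=\beta$. $\alpha_1\approx_q\alpha_2$ iff for all $a$, $\{\beta\mid\alpha_1\overset{a}{\Rightarrow}_q\beta\}=\{\beta\mid\alpha_2\overset{a}{\Rightarrow}_q\beta\}$. Consistency of $\mathcal{T}$ with $\mathcal{G}$: (1) $A\approx_{q_0}\varepsilon$ if $\mathcal{T}_{q_0}(A)=\varepsilon$; (2) $A\approx_q\mathcal{T}_q(A)$ if $\mathcal{T}_q(A)\ne\varepsilon$; (3)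 $AC\approx_qC$ if $\mathcal{T}_q(AC)=\mathcal{T}_q(C)=C$. *)

theory Defs
  imports Main
begin

text \<open>A BPA system is given by a finite set of variables V, a finite set of actions Act,
  a finite set of rules R (triples (A, a, alpha) standing for A --a--> alpha) and a
  distinguished silent action tau (which may or may not belong to Act).
  States of the LTS are words over V, represented as lists (head = leftmost symbol).\<close>

definition bpa_system :: "'v set \<Rightarrow> 'a set \<Rightarrow> ('v \<times> 'a \<times> 'v list) set \<Rightarrow> bool" where
  "bpa_system V Act R \<longleftrightarrow> finite V \<and> finite Act \<and> finite R \<and> R \<subseteq> V \<times> Act \<times> lists V"

definition lts_step :: "('v \<times> 'a \<times> 'v list) set \<Rightarrow> 'v list \<Rightarrow> 'a \<Rightarrow> 'v list \<Rightarrow> bool" where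
  "lts_step R s a s' \<longleftrightarrow> (\<exists>A \<alpha> \<beta>. s = A # \<beta> \<and> (A, a, \<alpha>) \<in> R \<and> s' = \<alpha> @ \<beta>)"

definition bb_match :: "('v \<times> 'a \<times> 'v list) set \<Rightarrow> 'a \<Rightarrow> ('v list \<times> 'v list) set
    \<Rightarrow> 'v list \<Rightarrow> 'v list \<Rightarrow> bool" where
  "bb_match R tau B s t \<longleftrightarrow>
     (\<forall>a s'. lts_step R s a s' \<longrightarrow>
        ((a = tau \<and> (s', t) \<in> B) \<or>
         (\<exists>tk t'. (\<lambda>x y. lts_step R x tau y \<and> (s, y) \<in> B)\<^sup>*\<^sup>* t tk
                 \<and> lts_step R tk a t' \<and> (s', t') \<in> B)))"

definition branching_bisimulation :: "('v \<times> 'a \<times> 'v list) set \<Rightarrow> 'a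
    \<Rightarrow> ('v list \<times> 'v list) set \<Rightarrow> bool" where
  "branching_bisimulation R tau B \<longleftrightarrow>
     (\<forall>(s, t) \<in> B. bb_match R tau B s t \<and> bb_match R tau (B\<inverse>) t s)"

definition branching_bisimilar :: "('v \<times> 'a \<times> 'v list) set \<Rightarrow> 'a \<Rightarrow> 'v list \<Rightarrow> 'v list \<Rightarrow> bool" where
  "branching_bisimilar R tau s t \<longleftrightarrow> (\<exists>B. branching_bisimulation R tau B \<and> (s, t) \<in> B)"

definition transducer :: "'q set \<Rightarrow> 'v set \<Rightarrow> ('q \<Rightarrow> 'v \<Rightarrow> 'q \<times> 'v list) \<Rightarrow> 'q \<Rightarrow> bool" where
  "transducer Q V \<Delta> q0 \<longleftrightarrow> finite Q \<and> q0 \<in> Q \<and>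
     (\<forall>q\<in>Q. \<forall>A\<in>V. fst (\<Delta> q A) \<in> Q \<and> snd (\<Delta> q A) \<in> lists V)"

text \<open>Run on a reversed word (the transducer reads right to left).
  run_rev Delta q xs = (q'', out) for xs = rev alpha means q'' <-alpha/out- q.\<close>
fun run_rev :: "('q \<Rightarrow> 'v \<Rightarrow> 'q \<times> 'v list) \<Rightarrow> 'q \<Rightarrow> 'v list \<Rightarrow> 'q \<times> 'v list" where
  "run_rev \<Delta> q [] = (q, [])"
| "run_rev \<Delta> q (A # xs) =
     (let (q', \<gamma>) = \<Delta> q A; (q'', \<beta>) = run_rev \<Delta> q' xs in (q'', \<beta> @ \<gamma>))"

definition run :: "('q \<Rightarrow> 'v \<Rightarrow> 'q \<times> 'v list) \<Rightarrow> 'q \<Rightarrow> 'v list \<Rightarrow> 'q \<times> 'v list" where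
  "run \<Delta> q \<alpha> = run_rev \<Delta> q (rev \<alpha>)"

definition T_out :: "('q \<Rightarrow> 'v \<Rightarrow> 'q \<times> 'v list) \<Rightarrow> 'q \<Rightarrow> 'v list \<Rightarrow> 'v list" where
  "T_out \<Delta> q \<alpha> = snd (run \<Delta> q \<alpha>)"

text \<open>q-normal forms: epsilon or A_k...A_1 with q_k <-A_k/A_k- ... q_1 <-A_1/A_1- q.
  copies_rev checks, on the reversed word, that every single step copies its symbol.\<close>
fun copies_rev :: "('q \<Rightarrow> 'v \<Rightarrow> 'q \<times> 'v list) \<Rightarrow> 'q \<Rightarrow> 'v list \<Rightarrow> bool" where
  "copies_rev \<Delta> q [] = True"
| "copies_rev \<Delta> q (A # xs) = (snd (\<Delta> q A) = [A] \<and> copies_rev \<Delta> (fst (\<Delta> q A)) xs)"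

definition normal_form :: "('q \<Rightarrow> 'v \<Rightarrow> 'q \<times> 'v list) \<Rightarrow> 'q \<Rightarrow> 'v list \<Rightarrow> bool" where
  "normal_form \<Delta> q \<alpha> \<longleftrightarrow> copies_rev \<Delta> q (rev \<alpha>)"

definition nfc_transducer :: "'q set \<Rightarrow> 'v set \<Rightarrow> ('q \<Rightarrow> 'v \<Rightarrow> 'q \<times> 'v list) \<Rightarrow> 'q \<Rightarrow> bool" where
  "nfc_transducer Q V \<Delta> q0 \<longleftrightarrow> transducer Q V \<Delta> q0 \<and>
     (\<forall>q\<in>Q. \<forall>A\<in>V. normal_form \<Delta> q (T_out \<Delta> q [A]) \<and>
        (\<forall>q' \<gamma>. \<Delta> q A = (q', \<gamma>) \<longrightarrow> run \<Delta> q \<gamma> = (q', \<gamma>)))"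

definition long_move :: "('v \<times> 'a \<times> 'v list) set \<Rightarrow> 'a \<Rightarrow> ('q \<Rightarrow> 'v \<Rightarrow> 'q \<times> 'v list) \<Rightarrow> 'q
    \<Rightarrow> 'v list \<Rightarrow> 'a \<Rightarrow> 'v list \<Rightarrow> bool" where
  "long_move R tau \<Delta> q \<alpha> a \<beta> \<longleftrightarrow>
     (a = tau \<and> \<beta> = T_out \<Delta> q \<alpha>) \<or>
     (\<exists>\<alpha>k \<beta>'. (\<lambda>x y. lts_step R x tau y \<and> T_out \<Delta> q x = T_out \<Delta> q y)\<^sup>*\<^sup>* \<alpha> \<alpha>k
              \<and> lts_step R \<alpha>k a \<beta>' \<and> T_out \<Delta> q \<beta>' = \<beta>)"

definition approx_q :: "('v \<times> 'a \<times> 'v list) set \<Rightarrow> 'a \<Rightarrow> ('q \<Rightarrow> 'v \<Rightarrow> 'q \<times> 'v list) \<Rightarrow> 'q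
    \<Rightarrow> 'v list \<Rightarrow> 'v list \<Rightarrow> bool" where
  "approx_q R tau \<Delta> q \<alpha>1 \<alpha>2 \<longleftrightarrow>
     (\<forall>a. {\<beta>. long_move R tau \<Delta> q \<alpha>1 a \<beta>} = {\<beta>. long_move R tau \<Delta> q \<alpha>2 a \<beta>})"

definition consistent :: "'q set \<Rightarrow> 'v set \<Rightarrow> ('q \<Rightarrow> 'v \<Rightarrow> 'q \<times> 'v list) \<Rightarrow> 'q
    \<Rightarrow> ('v \<times> 'a \<times> 'v list) set \<Rightarrow> 'a \<Rightarrow> bool" where
  "consistent Q V \<Delta> q0 R tau \<longleftrightarrow>
     (\<forall>A\<in>V. T_out \<Delta> q0 [A] = [] \<longrightarrow> approx_q R tau \<Delta> q0 [A] []) \<and>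
     (\<forall>q\<in>Q. \<forall>A\<in>V. T_out \<Delta> q [A] \<noteq> [] \<longrightarrow> approx_q R tau \<Delta> q [A] (T_out \<Delta> q [A])) \<and>
     (\<forall>q\<in>Q. \<forall>A\<in>V. \<forall>C\<in>V. T_out \<Delta> q [A, C] = T_out \<Delta> q [C] \<and> T_out \<Delta> q [C] = [C]
        \<longrightarrow> approx_q R tau \<Delta> q [A, C] [C])"

definition T_equiv :: "'v set \<Rightarrow> ('q \<Rightarrow> 'v \<Rightarrow> 'q \<times> 'v list) \<Rightarrow> 'q \<Rightarrow> ('v list \<times> 'v list) set" where
  "T_equiv V \<Delta> q0 = {(\<alpha>, \<beta>). \<alpha> \<in> lists V \<and> \<beta> \<in> lists V \<and> T_out \<Delta> q0 \<alpha> = T_out \<Delta> q0 \<beta>}"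

end

theory Submission
  imports Defs
begin


lemma rr_fst[simp]: "fst (run_rev \<Delta> q (A # xs)) = fst (run_rev \<Delta> (fst (\<Delta> q A)) xs)"
  by (simp split: prod.splits)
lemma rr_snd[simp]: "snd (run_rev \<Delta> q (A # xs)) = snd (run_rev \<Delta> (fst (\<Delta> q A)) xs) @ snd (\<Delta> q A)"
  by (simp split: prod.splits)

declare run_rev.simps(2)[simp del]

lemma rr_app_fst: "fst (run_rev \<Delta> q (xs @ ys)) = fst (run_rev \<Delta> (fst (run_rev \<Delta> q xs)) ys)"
  by (induction xs arbitrary: q) auto
lemma rr_app_snd: "snd (run_rev \<Delta> q (xs @ ys)) = snd (run_rev \<Delta> (fst (run_rev \<Delta> q xs)) ys) @ snd (run_rev \<Delta> q xs)"
  by (induction xs arbitrary: q) auto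

lemma T_app: "T_out \<Delta> q (x @ \<beta>) = T_out \<Delta> (fst (run \<Delta> q \<beta>)) x @ T_out \<Delta> q \<beta>"
  by (simp add: T_out_def run_def rr_app_snd)
lemma st_app: "fst (run \<Delta> q (x @ \<beta>)) = fst (run \<Delta> (fst (run \<Delta> q \<beta>)) x)"
  by (simp add: run_def rr_app_fst)
lemma T_Nil[simp]: "T_out \<Delta> q [] = []"
  by (simp add: T_out_def run_def)

lemma reach: "transducer Q V \<Delta> q0 \<Longrightarrow> q \<in> Q \<Longrightarrow> xs \<in> lists V \<Longrightarrow>
   fst (run_rev \<Delta> q xs) \<in> Q \<and> snd (run_rev \<Delta> q xs) \<in> lists V"
  by (induction xs arbitrary: q) (auto simp: transducer_def)

lemma idem: assumes "nfc_transducer Q V \<Delta> q0" shows "q \<in> Q \<Longrightarrow> xs \<in> lists V \<Longrightarrow>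
   run_rev \<Delta> q (rev (snd (run_rev \<Delta> q xs))) = run_rev \<Delta> q xs"
proof (induction xs arbitrary: q)
  case Nil then show ?case by simp
next
  case (Cons A xs)
  obtain q1 \<gamma> where d: "\<Delta> q A = (q1, \<gamma>)" by fastforce
  have rg: "run_rev \<Delta> q (rev \<gamma>) = (q1, \<gamma>)"
    using assms Cons.prems d unfolding nfc_transducer_def run_def by auto
  have q1: "q1 \<in> Q" using assms Cons.prems d unfolding nfc_transducer_def transducer_def
    by (metis fst_conv listsE)
  have ih: "run_rev \<Delta> q1 (rev (snd (run_rev \<Delta> q1 xs))) = run_rev \<Delta> q1 xs"
    using Cons q1 by auto
  show ?case
    by (simp add: d prod_eq_iff rr_app_fst rr_app_snd rg ih)
qed

lemma run_idem: "nfc_transducer Q V \<Delta> q0 \<Longrightarrow> q \<in> Q \<Longrightarrow> \<alpha> \<in> lists V \<Longrightarrow>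
   run \<Delta> q (T_out \<Delta> q \<alpha>) = run \<Delta> q \<alpha>"
  unfolding run_def T_out_def by (rule idem) auto

lemma copies_append: "copies_rev \<Delta> q (xs @ ys) \<longleftrightarrow> copies_rev \<Delta> q xs \<and> copies_rev \<Delta> (fst (run_rev \<Delta> q xs)) ys"
  by (induction xs arbitrary: q) auto

lemma copies_out: "copies_rev \<Delta> q xs \<Longrightarrow> snd (run_rev \<Delta> q xs) = rev xs"
  by (induction xs arbitrary: q) auto

lemma copies: assumes "nfc_transducer Q V \<Delta> q0" shows "q \<in> Q \<Longrightarrow> xs \<in> lists V \<Longrightarrow>
   copies_rev \<Delta> q (rev (snd (run_rev \<Delta> q xs)))"
proof (induction xs arbitrary: q)
  case Nil then show ?case by simp
next
  case (Cons A xs)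
  obtain q1 \<gamma> where d: "\<Delta> q A = (q1, \<gamma>)" by fastforce
  have rg: "run_rev \<Delta> q (rev \<gamma>) = (q1, \<gamma>)"
    using assms Cons.prems d unfolding nfc_transducer_def run_def by auto
  have "copies_rev \<Delta> q (rev (snd (\<Delta> q A)))"
    using assms Cons.prems unfolding nfc_transducer_def normal_form_def T_out_def run_def by auto
  then have cg: "copies_rev \<Delta> q (rev \<gamma>)" using d by simp
  have q1: "q1 \<in> Q" using assms Cons.prems d unfolding nfc_transducer_def transducer_def
    by (metis fst_conv listsE)
  show ?case using Cons.IH[OF q1] Cons.prems
    by (simp add: d copies_append rg cg)
qed



definition tp where "tp R tau \<Delta> q x y \<longleftrightarrow> lts_step R x tau y \<and> T_out \<Delta> q x = T_out \<Delta> q y"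

lemma tp_eq: "tp R tau \<Delta> q = (\<lambda>x y. lts_step R x tau y \<and> T_out \<Delta> q x = T_out \<Delta> q y)"
  by (intro ext) (simp add: tp_def)

lemma long_move_alt: "long_move R tau \<Delta> q \<alpha> a \<beta> \<longleftrightarrow> (a = tau \<and> \<beta> = T_out \<Delta> q \<alpha>) \<or>
     (\<exists>\<alpha>k \<beta>'. (tp R tau \<Delta> q)\<^sup>*\<^sup>* \<alpha> \<alpha>k \<and> lts_step R \<alpha>k a \<beta>' \<and> T_out \<Delta> q \<beta>' = \<beta>)"
  by (simp add: long_move_def tp_eq)

lemma approx_iff: "approx_q R tau \<Delta> q x y \<longleftrightarrow> (\<forall>a w. long_move R tau \<Delta> q x a w \<longleftrightarrow> long_move R tau \<Delta> q y a w)"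
  by (auto simp: approx_q_def set_eq_iff)

lemma step_app: "lts_step R x a x' \<Longrightarrow> lts_step R (x @ \<beta>) a (x' @ \<beta>)"
  unfolding lts_step_def by auto
lemma step_app_inv: "lts_step R (x @ \<beta>) a y \<Longrightarrow> x \<noteq> [] \<Longrightarrow> \<exists>x'. lts_step R x a x' \<and> y = x' @ \<beta>"
  unfolding lts_step_def by (cases x) auto
lemma step_ne: "lts_step R x a y \<Longrightarrow> x \<noteq> []"
  unfolding lts_step_def by auto

lemma tp_T: "(tp R tau \<Delta> q)\<^sup>*\<^sup>* x y \<Longrightarrow> T_out \<Delta> q x = T_out \<Delta> q y"
  by (induction rule: rtranclp_induct) (auto simp: tp_def)

lemma lift: "(tp R tau \<Delta> (fst (run \<Delta> q \<beta>)))\<^sup>*\<^sup>* x z \<Longrightarrow> (tp R tau \<Delta> q)\<^sup>*\<^sup>* (x @ \<beta>) (z @ \<beta>)"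
proof (induction rule: rtranclp_induct)
  case base then show ?case by simp
next
  case (step y z)
  have "tp R tau \<Delta> q (y @ \<beta>) (z @ \<beta>)"
    using step(2) by (auto simp: tp_def step_app T_app)
  with step(3) show ?case by (rule rtranclp.rtrancl_into_rtrancl)
qed

lemma unlift: "(tp R tau \<Delta> q)\<^sup>*\<^sup>* (x @ \<beta>) y \<Longrightarrow> T_out \<Delta> (fst (run \<Delta> q \<beta>)) x \<noteq> [] \<Longrightarrow>
   \<exists>z. y = z @ \<beta> \<and> (tp R tau \<Delta> (fst (run \<Delta> q \<beta>)))\<^sup>*\<^sup>* x z"
proof (induction rule: rtranclp_induct)
  case base then show ?case by auto
next
  case (step y y')
  obtain z where z: "y = z @ \<beta>" "(tp R tau \<Delta> (fst (run \<Delta> q \<beta>)))\<^sup>*\<^sup>* x z" using step by auto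
  have "T_out \<Delta> q (x @ \<beta>) = T_out \<Delta> q y" using step(1) by (rule tp_T)
  then have "T_out \<Delta> (fst (run \<Delta> q \<beta>)) z = T_out \<Delta> (fst (run \<Delta> q \<beta>)) x" using z by (simp add: T_app)
  then have "z \<noteq> []" using step(4) by auto
  then obtain z' where z': "lts_step R z tau z'" "y' = z' @ \<beta>"
    using step(2) z step_app_inv unfolding tp_def by metis
  have "T_out \<Delta> (fst (run \<Delta> q \<beta>)) z' = T_out \<Delta> (fst (run \<Delta> q \<beta>)) z"
    using step(2) z z' by (simp add: tp_def T_app)
  then have "tp R tau \<Delta> (fst (run \<Delta> q \<beta>)) z z'" using z' by (simp add: tp_def)
  then have "(tp R tau \<Delta> (fst (run \<Delta> q \<beta>)))\<^sup>*\<^sup>* x z'" using z(2) by (meson rtranclp.rtrancl_into_rtrancl)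
  then show ?case using z' by auto
qed

lemma split: "(tp R tau \<Delta> q)\<^sup>*\<^sup>* (x @ \<beta>) y \<Longrightarrow>
   (\<exists>z. z \<noteq> [] \<and> y = z @ \<beta> \<and> (tp R tau \<Delta> (fst (run \<Delta> q \<beta>)))\<^sup>*\<^sup>* x z) \<or>
   ((tp R tau \<Delta> (fst (run \<Delta> q \<beta>)))\<^sup>*\<^sup>* x [] \<and> (tp R tau \<Delta> q)\<^sup>*\<^sup>* \<beta> y)"
proof (induction rule: rtranclp_induct)
  case base then show ?case by (cases x) auto
next
  case (step y y')
  from step(3) show ?case
  proof
    assume "\<exists>z. z \<noteq> [] \<and> y = z @ \<beta> \<and> (tp R tau \<Delta> (fst (run \<Delta> q \<beta>)))\<^sup>*\<^sup>* x z"
    then obtain z where z: "z \<noteq> []" "y = z @ \<beta>" "(tp R tau \<Delta> (fst (run \<Delta> q \<beta>)))\<^sup>*\<^sup>* x z" by auto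
    then obtain z' where z': "lts_step R z tau z'" "y' = z' @ \<beta>"
      using step(2) step_app_inv unfolding tp_def by metis
    have "T_out \<Delta> (fst (run \<Delta> q \<beta>)) z' = T_out \<Delta> (fst (run \<Delta> q \<beta>)) z"
      using step(2) z z' by (simp add: tp_def T_app)
    then have "tp R tau \<Delta> (fst (run \<Delta> q \<beta>)) z z'" using z' by (simp add: tp_def)
    then have zz: "(tp R tau \<Delta> (fst (run \<Delta> q \<beta>)))\<^sup>*\<^sup>* x z'" using z by (meson rtranclp.rtrancl_into_rtrancl)
    show ?thesis
    proof (cases "z' = []")
      case True then show ?thesis using zz z' by auto
    next
      case False then show ?thesis using zz z' by auto
    qed
  next
    assume "(tp R tau \<Delta> (fst (run \<Delta> q \<beta>)))\<^sup>*\<^sup>* x [] \<and> (tp R tau \<Delta> q)\<^sup>*\<^sup>* \<beta> y"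
    then show ?thesis using step(2) by (meson rtranclp.rtrancl_into_rtrancl)
  qed
qed



lemma cong_left1:
  assumes ap: "approx_q R tau \<Delta> q0 \<beta> \<beta>'" and rr: "run \<Delta> q0 \<beta> = run \<Delta> q0 \<beta>'"
    and lm: "long_move R tau \<Delta> q0 (x @ \<beta>) a w"
  shows "long_move R tau \<Delta> q0 (x @ \<beta>') a w"
proof -
  define p where "p = fst (run \<Delta> q0 \<beta>)"
  have p': "p = fst (run \<Delta> q0 \<beta>')" using rr p_def by simp
  have Tb: "T_out \<Delta> q0 \<beta> = T_out \<Delta> q0 \<beta>'" using rr by (simp add: T_out_def)
  have Tx: "T_out \<Delta> q0 (z @ \<beta>) = T_out \<Delta> q0 (z @ \<beta>')" for z
    using Tb by (simp add: T_app p_def[symmetric] p'[symmetric])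
  from lm[unfolded long_move_alt] show ?thesis
  proof
    assume "a = tau \<and> w = T_out \<Delta> q0 (x @ \<beta>)"
    then show ?thesis using Tx by (simp add: long_move_alt)
  next
    assume "\<exists>\<alpha>k \<beta>''. (tp R tau \<Delta> q0)\<^sup>*\<^sup>* (x @ \<beta>) \<alpha>k \<and> lts_step R \<alpha>k a \<beta>'' \<and> T_out \<Delta> q0 \<beta>'' = w"
    then obtain \<alpha>k \<beta>'' where h: "(tp R tau \<Delta> q0)\<^sup>*\<^sup>* (x @ \<beta>) \<alpha>k" "lts_step R \<alpha>k a \<beta>''" "T_out \<Delta> q0 \<beta>'' = w"
      by blast
    from split[OF h(1)] show ?thesis
    proof
      assume "\<exists>z. z \<noteq> [] \<and> \<alpha>k = z @ \<beta> \<and> (tp R tau \<Delta> (fst (run \<Delta> q0 \<beta>)))\<^sup>*\<^sup>* x z"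
      then obtain z where z: "z \<noteq> []" "\<alpha>k = z @ \<beta>" "(tp R tau \<Delta> p)\<^sup>*\<^sup>* x z"
        by (auto simp: p_def)
      obtain z' where z': "lts_step R z a z'" "\<beta>'' = z' @ \<beta>" using step_app_inv h(2) z by metis
      have "(tp R tau \<Delta> q0)\<^sup>*\<^sup>* (x @ \<beta>') (z @ \<beta>')" using lift[of R tau \<Delta> q0 \<beta>'] z(3) p' by simp
      moreover have "lts_step R (z @ \<beta>') a (z' @ \<beta>')" using z'(1) by (rule step_app)
      moreover have "T_out \<Delta> q0 (z' @ \<beta>') = w" using Tx h(3) z' by simp
      ultimately show ?thesis by (auto simp: long_move_alt)
    next
      assume "(tp R tau \<Delta> (fst (run \<Delta> q0 \<beta>)))\<^sup>*\<^sup>* x [] \<and> (tp R tau \<Delta> q0)\<^sup>*\<^sup>* \<beta> \<alpha>k"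
      then have x0: "(tp R tau \<Delta> p)\<^sup>*\<^sup>* x []" and b: "(tp R tau \<Delta> q0)\<^sup>*\<^sup>* \<beta> \<alpha>k" by (auto simp: p_def)
      have "long_move R tau \<Delta> q0 \<beta> a w" using b h by (auto simp: long_move_alt)
      then have lb: "long_move R tau \<Delta> q0 \<beta>' a w" using ap by (simp add: approx_iff)
      have px: "(tp R tau \<Delta> q0)\<^sup>*\<^sup>* (x @ \<beta>') \<beta>'" using lift[of R tau \<Delta> q0 \<beta>' x "[]"] x0 p' by simp
      have Tx0: "T_out \<Delta> p x = []" using tp_T[OF x0] by simp
      from lb[unfolded long_move_alt] show ?thesis
      proof
        assume "a = tau \<and> w = T_out \<Delta> q0 \<beta>'"
        then show ?thesis using Tx0 by (simp add: long_move_alt T_app p'[symmetric])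
      next
        assume "\<exists>\<alpha>k \<beta>''. (tp R tau \<Delta> q0)\<^sup>*\<^sup>* \<beta>' \<alpha>k \<and> lts_step R \<alpha>k a \<beta>'' \<and> T_out \<Delta> q0 \<beta>'' = w"
        then show ?thesis using px by (meson long_move_alt rtranclp_trans)
      qed
    qed
  qed
qed

lemma cong_left:
  assumes "approx_q R tau \<Delta> q0 \<beta> \<beta>'" and "run \<Delta> q0 \<beta> = run \<Delta> q0 \<beta>'"
  shows "approx_q R tau \<Delta> q0 (x @ \<beta>) (x @ \<beta>')"
proof -
  have "approx_q R tau \<Delta> q0 \<beta>' \<beta>" using assms(1) by (auto simp: approx_iff)
  then show ?thesis using assms cong_left1 unfolding approx_iff[of R tau \<Delta> q0 "x @ \<beta>"]
    by (metis (no_types))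
qed

lemma cong_head1:
  assumes ne: "T_out \<Delta> (fst (run \<Delta> q0 \<beta>)) x \<noteq> []"
    and ap: "approx_q R tau \<Delta> (fst (run \<Delta> q0 \<beta>)) x y"
    and lm: "long_move R tau \<Delta> q0 (x @ \<beta>) a w"
  shows "long_move R tau \<Delta> q0 (y @ \<beta>) a w"
proof -
  define p where "p = fst (run \<Delta> q0 \<beta>)"
  have ap': "long_move R tau \<Delta> p x b v \<longleftrightarrow> long_move R tau \<Delta> p y b v" for b v
    using ap by (simp add: approx_iff p_def)
  have key: "long_move R tau \<Delta> q0 (y @ \<beta>) b (v @ T_out \<Delta> q0 \<beta>)"
    if "long_move R tau \<Delta> p y b v" for b v
    using that[unfolded long_move_alt]
  proof
    assume "b = tau \<and> v = T_out \<Delta> p y"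
    then show ?thesis by (simp add: long_move_alt T_app p_def)
  next
    assume "\<exists>\<alpha>k \<beta>'. (tp R tau \<Delta> p)\<^sup>*\<^sup>* y \<alpha>k \<and> lts_step R \<alpha>k b \<beta>' \<and> T_out \<Delta> p \<beta>' = v"
    then obtain yk y' where h: "(tp R tau \<Delta> p)\<^sup>*\<^sup>* y yk" "lts_step R yk b y'" "T_out \<Delta> p y' = v" by blast
    have "(tp R tau \<Delta> q0)\<^sup>*\<^sup>* (y @ \<beta>) (yk @ \<beta>)" using lift h(1) p_def by metis
    moreover have "lts_step R (yk @ \<beta>) b (y' @ \<beta>)" using h(2) by (rule step_app)
    moreover have "T_out \<Delta> q0 (y' @ \<beta>) = v @ T_out \<Delta> q0 \<beta>" using h(3) by (simp add: T_app p_def)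
    ultimately show ?thesis by (auto simp: long_move_alt)
  qed
  from lm[unfolded long_move_alt] show ?thesis
  proof
    assume a: "a = tau \<and> w = T_out \<Delta> q0 (x @ \<beta>)"
    have "long_move R tau \<Delta> p x tau (T_out \<Delta> p x)" by (simp add: long_move_alt)
    then have "long_move R tau \<Delta> p y tau (T_out \<Delta> p x)" using ap' by simp
    from key[OF this] show ?thesis using a by (simp add: T_app p_def)
  next
    assume "\<exists>\<alpha>k \<beta>''. (tp R tau \<Delta> q0)\<^sup>*\<^sup>* (x @ \<beta>) \<alpha>k \<and> lts_step R \<alpha>k a \<beta>'' \<and> T_out \<Delta> q0 \<beta>'' = w"
    then obtain \<alpha>k \<beta>'' where h: "(tp R tau \<Delta> q0)\<^sup>*\<^sup>* (x @ \<beta>) \<alpha>k" "lts_step R \<alpha>k a \<beta>''" "T_out \<Delta> q0 \<beta>'' = w"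
      by blast
    obtain z where z: "\<alpha>k = z @ \<beta>" "(tp R tau \<Delta> p)\<^sup>*\<^sup>* x z" using unlift[OF h(1) ne] p_def by auto
    have "T_out \<Delta> p z \<noteq> []" using tp_T[OF z(2)] ne p_def by simp
    then have "z \<noteq> []" by auto
    then obtain z' where z': "lts_step R z a z'" "\<beta>'' = z' @ \<beta>" using step_app_inv h(2) z(1) by metis
    have "long_move R tau \<Delta> p x a (T_out \<Delta> p z')" using z(2) z'(1) by (auto simp: long_move_alt)
    then have "long_move R tau \<Delta> p y a (T_out \<Delta> p z')" using ap' by simp
    from key[OF this] show ?thesis using h(3) z' by (simp add: T_app p_def)
  qed
qed

lemma cong_head:
  assumes "T_out \<Delta> (fst (run \<Delta> q0 \<beta>)) x \<noteq> []" "T_out \<Delta> (fst (run \<Delta> q0 \<beta>)) y \<noteq> []"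
    and "approx_q R tau \<Delta> (fst (run \<Delta> q0 \<beta>)) x y"
  shows "approx_q R tau \<Delta> q0 (x @ \<beta>) (y @ \<beta>)"
proof -
  have "approx_q R tau \<Delta> (fst (run \<Delta> q0 \<beta>)) y x" using assms(3) by (auto simp: approx_iff)
  then show ?thesis using assms cong_head1 unfolding approx_iff[of R tau \<Delta> q0 "x @ \<beta>"]
    by (metis (no_types))
qed

lemma approx_trans: "approx_q R tau \<Delta> q x y \<Longrightarrow> approx_q R tau \<Delta> q y z \<Longrightarrow> approx_q R tau \<Delta> q x z"
  by (simp add: approx_q_def)



lemma rev_lists[simp]: "rev xs \<in> lists V \<longleftrightarrow> xs \<in> lists V"
  by auto

lemma main:
  assumes nfc: "nfc_transducer Q V \<Delta> q0" and con: "consistent Q V \<Delta> q0 R tau"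
  shows "\<alpha> \<in> lists V \<Longrightarrow> approx_q R tau \<Delta> q0 \<alpha> (T_out \<Delta> q0 \<alpha>)"
proof (induction \<alpha>)
  case Nil then show ?case by (simp add: approx_q_def)
next
  case (Cons A \<alpha>')
  have tr: "transducer Q V \<Delta> q0" and q0: "q0 \<in> Q" using nfc by (auto simp: nfc_transducer_def transducer_def)
  have AV: "A \<in> V" and aV: "\<alpha>' \<in> lists V" using Cons.prems by auto
  define \<nu> where "\<nu> = T_out \<Delta> q0 \<alpha>'"
  define q where "q = fst (run \<Delta> q0 \<alpha>')"
  have rq: "fst (run_rev \<Delta> q0 (rev \<alpha>')) \<in> Q \<and> snd (run_rev \<Delta> q0 (rev \<alpha>')) \<in> lists V"
  proof -
    have "rev \<alpha>' \<in> lists V" using aV by auto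
    then show ?thesis using reach[OF tr q0, of "rev \<alpha>'"] by blast
  qed
  have qQ: "q \<in> Q" and \<nu>V: "\<nu> \<in> lists V" using rq by (auto simp: q_def \<nu>_def run_def T_out_def)
  have idm: "run \<Delta> q0 \<nu> = run \<Delta> q0 \<alpha>'" using run_idem[OF nfc q0 aV] \<nu>_def by simp
  have s1: "approx_q R tau \<Delta> q0 ([A] @ \<alpha>') ([A] @ \<nu>)"
    using cong_left[OF _ idm[symmetric], of R tau "[A]"] Cons.IH[OF aV] \<nu>_def approx_iff by metis
  have Tn: "T_out \<Delta> q0 (A # \<alpha>') = T_out \<Delta> q [A] @ \<nu>"
    using T_app[of \<Delta> q0 "[A]" \<alpha>'] by (simp add: q_def \<nu>_def)
  have sq: "fst (run \<Delta> q0 \<nu>) = q" using idm q_def by simp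
  have "approx_q R tau \<Delta> q0 ([A] @ \<nu>) (T_out \<Delta> q0 (A # \<alpha>'))"
  proof (cases "T_out \<Delta> q [A] = []")
    case False
    have c2: "approx_q R tau \<Delta> q [A] (T_out \<Delta> q [A])" using con False qQ AV by (simp add: consistent_def)
    have "run \<Delta> q (T_out \<Delta> q [A]) = run \<Delta> q [A]" using run_idem[OF nfc qQ] AV by simp
    then have "T_out \<Delta> q (T_out \<Delta> q [A]) = T_out \<Delta> q [A]" by (simp add: T_out_def)
    then show ?thesis using cong_head[of \<Delta> q0 \<nu> "[A]" "T_out \<Delta> q [A]" R tau] c2 False sq Tn by simp
  next
    case True
    show ?thesis
    proof (cases \<nu>)
      case Nil
      have "run \<Delta> q0 [] = (q0, [])" by (simp add: run_def)
      then have "q = q0" using idm Nil q_def by (metis fst_conv)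
      then have "approx_q R tau \<Delta> q0 [A] []" using con True AV by (simp add: consistent_def)
      then show ?thesis using Nil Tn True by simp
    next
      case (Cons C \<nu>')
      define p where "p = fst (run \<Delta> q0 \<nu>')"
      have cp: "copies_rev \<Delta> q0 (rev \<nu>)"
        using copies[OF nfc q0, of "rev \<alpha>'"] aV by (simp add: \<nu>_def T_out_def run_def)
      then have cp2: "copies_rev \<Delta> q0 (rev \<nu>')" "copies_rev \<Delta> p [C]"
        using Cons by (auto simp: copies_append p_def run_def)
      then have dC: "snd (\<Delta> p C) = [C]" by simp
      have Tnu': "T_out \<Delta> q0 \<nu>' = \<nu>'" using copies_out[OF cp2(1)] by (simp add: T_out_def run_def)
      have "fst (run \<Delta> q0 \<nu>) = fst (run \<Delta> p [C])" using st_app[of \<Delta> q0 "[C]" \<nu>'] Cons p_def by simp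
      then have fC: "fst (run \<Delta> p [C]) = q" using sq by simp
      have TC: "T_out \<Delta> p [C] = [C]" using dC by (simp add: T_out_def run_def)
      have TAC: "T_out \<Delta> p [A, C] = [C]"
        using T_app[of \<Delta> p "[A]" "[C]"] fC TC True by simp
      have CV: "C \<in> V" and \<nu>'V: "\<nu>' \<in> lists V" using \<nu>V Cons by auto
      have pQ: "p \<in> Q" using reach[OF tr q0, of "rev \<nu>'"] \<nu>'V by (simp add: p_def run_def)
      have c3: "approx_q R tau \<Delta> p [A, C] [C]" using con pQ AV CV TAC TC by (simp add: consistent_def)
      have "approx_q R tau \<Delta> q0 ([A, C] @ \<nu>') ([C] @ \<nu>')"
        using cong_head[of \<Delta> q0 \<nu>' "[A, C]" "[C]" R tau] c3 TAC TC p_def by simp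
      then show ?thesis using Cons Tn True by simp
    qed
  qed
  then show ?case using approx_trans s1 by fastforce
qed



lemma step_lists: "bpa_system V Act R \<Longrightarrow> lts_step R s a s' \<Longrightarrow> s \<in> lists V \<Longrightarrow> s' \<in> lists V"
  unfolding bpa_system_def lts_step_def by fastforce

lemma bb:
  assumes bpa: "bpa_system V Act R" and nfc: "nfc_transducer Q V \<Delta> q0" and con: "consistent Q V \<Delta> q0 R tau"
    and sV: "s \<in> lists V" and tV: "t \<in> lists V" and eq: "T_out \<Delta> q0 s = T_out \<Delta> q0 t"
  shows "bb_match R tau (T_equiv V \<Delta> q0) s t"
  unfolding bb_match_def
proof (intro allI impI)
  fix a s' assume st: "lts_step R s a s'"
  have s'V: "s' \<in> lists V" using step_lists[OF bpa st sV] .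
  have "long_move R tau \<Delta> q0 s a (T_out \<Delta> q0 s')" using st by (auto simp: long_move_alt)
  then have "long_move R tau \<Delta> q0 (T_out \<Delta> q0 s) a (T_out \<Delta> q0 s')"
    using main[OF nfc con sV] by (simp add: approx_iff)
  then have "long_move R tau \<Delta> q0 (T_out \<Delta> q0 t) a (T_out \<Delta> q0 s')" using eq by simp
  then have lt: "long_move R tau \<Delta> q0 t a (T_out \<Delta> q0 s')"
    using main[OF nfc con tV] by (simp add: approx_iff)
  let ?B = "T_equiv V \<Delta> q0"
  from lt[unfolded long_move_alt] show
    "(a = tau \<and> (s', t) \<in> ?B) \<or>
     (\<exists>tk t'. (\<lambda>x y. lts_step R x tau y \<and> (s, y) \<in> ?B)\<^sup>*\<^sup>* t tk \<and> lts_step R tk a t' \<and> (s', t') \<in> ?B)"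
  proof
    assume "a = tau \<and> T_out \<Delta> q0 s' = T_out \<Delta> q0 t"
    then show ?thesis using s'V tV by (simp add: T_equiv_def)
  next
    assume "\<exists>\<alpha>k \<beta>'. (tp R tau \<Delta> q0)\<^sup>*\<^sup>* t \<alpha>k \<and> lts_step R \<alpha>k a \<beta>' \<and> T_out \<Delta> q0 \<beta>' = T_out \<Delta> q0 s'"
    then obtain tk t' where h: "(tp R tau \<Delta> q0)\<^sup>*\<^sup>* t tk" "lts_step R tk a t'" "T_out \<Delta> q0 t' = T_out \<Delta> q0 s'"
      by blast
    have inv: "y \<in> lists V \<and> (\<lambda>x y. lts_step R x tau y \<and> (s, y) \<in> ?B)\<^sup>*\<^sup>* t y"
      if "(tp R tau \<Delta> q0)\<^sup>*\<^sup>* t y" for y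
      using that
    proof (induction rule: rtranclp_induct)
      case base then show ?case using tV by simp
    next
      case (step y z)
      have zV: "z \<in> lists V" using step step_lists[OF bpa] by (auto simp: tp_def)
      have "T_out \<Delta> q0 t = T_out \<Delta> q0 z"
        using tp_T[OF rtranclp.rtrancl_into_rtrancl[OF step(1) step(2)]] .
      then have "(s, z) \<in> ?B" using sV zV eq by (simp add: T_equiv_def)
      then show ?case using step zV by (auto simp: tp_def intro: rtranclp.rtrancl_into_rtrancl)
    qed
    have "t' \<in> lists V" using inv[OF h(1)] h(2) step_lists[OF bpa] by blast
    then have "(s', t') \<in> ?B" using h(3) s'V by (simp add: T_equiv_def)
    then show ?thesis using inv[OF h(1)] h(2) by blast
  qed
qed

theorem lemma4p3:
  fixes V :: "'v set" and Act :: "'a set" and R :: "('v \<times> 'a \<times> 'v list) set" and tau :: 'a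
    and Q :: "'q set" and \<Delta> :: "'q \<Rightarrow> 'v \<Rightarrow> 'q \<times> 'v list" and q0 :: 'q
  assumes "bpa_system V Act R"
    and "nfc_transducer Q V \<Delta> q0"
    and "consistent Q V \<Delta> q0 R tau"
  shows "branching_bisimulation R tau (T_equiv V \<Delta> q0)
         \<and> (\<forall>\<alpha>\<in>lists V. \<forall>\<beta>\<in>lists V. T_out \<Delta> q0 \<alpha> = T_out \<Delta> q0 \<beta>
               \<longrightarrow> branching_bisimilar R tau \<alpha> \<beta>)"
proof -
  have conv: "(T_equiv V \<Delta> q0)\<inverse> = T_equiv V \<Delta> q0" by (auto simp: T_equiv_def)
  have bbs: "branching_bisimulation R tau (T_equiv V \<Delta> q0)"
    unfolding branching_bisimulation_def conv
    using bb[OF assms] by (auto simp: T_equiv_def)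
  show ?thesis
    using bbs by (auto simp: branching_bisimilar_def T_equiv_def)
qed

end
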